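(* Let $\mathcal{M}\subset\mathbb{R}^n$ be a symmetric real algebraic variety, i.e. $\mathcal{M}=\{x\in\mathbb{R}^n:p(x)=0\}$ for some real polynomial $p$, and $\sigma\mathcal{M}=\mathcal{M}$ for every permutation $\sigma$ of the coordinates. Then $\lambda^{-1}(\mathcal{M})=\{X\in\mathbf{S}^n:\lambda(X)\in\mathcal{M}\}$ is an algebraic variety of $\mathbf{S}^n$, i.e. the zero set of a polynomial in the entries of $X$.
   Context: $\mathbf{S}^n$ is the space of real symmetric $n\times n$ matrices; $\lambda(X)\in\mathbb{R}^n$ is the vector of eigenvalues of $X$ counted with multiplicity and ordered nonincreasingly. Permutations act on $\mathbb{R}^n$ by permuting coordinates: $(\sigma x)_i=x_{\sigma^{-1}(i)}$. *)

theory Defs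
  imports "Jordan_Normal_Form.Char_Poly"
begin

inductive_set polyfun :: "'v set \<Rightarrow> (('v \<Rightarrow> real) \<Rightarrow> real) set" for V :: "'v set" where
  pf_const: "(\<lambda>x. c) \<in> polyfun V"
| pf_var: "v \<in> V \<Longrightarrow> (\<lambda>x. x v) \<in> polyfun V"
| pf_add: "p \<in> polyfun V \<Longrightarrow> q \<in> polyfun V \<Longrightarrow> (\<lambda>x. p x + q x) \<in> polyfun V"
| pf_mult: "p \<in> polyfun V \<Longrightarrow> q \<in> polyfun V \<Longrightarrow> (\<lambda>x. p x * q x) \<in> polyfun V"

definition perm_vec :: "(nat \<Rightarrow> nat) \<Rightarrow> real vec \<Rightarrow> real vec" where
  "perm_vec \<sigma> x = vec (dim_vec x) (\<lambda>i. x $ (Hilbert_Choice.inv \<sigma> i))"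

definition eigvals :: "real mat \<Rightarrow> real vec" where
  "eigvals X = (THE l. l \<in> carrier_vec (dim_row X)
      \<and> (\<forall>i j. i \<le> j \<and> j < dim_row X \<longrightarrow> l $ j \<le> l $ i)
      \<and> char_poly X = (\<Prod>i<dim_row X. [:- (l $ i), 1:]))"

end

theory Submission
  imports Defs "Jordan_Normal_Form.Schur_Decomposition" "HOL-Combinatorics.List_Permutation"
begin


lemma polyfun_dep: "f \<in> polyfun V \<Longrightarrow> (\<And>v. v \<in> V \<Longrightarrow> x v = y v) \<Longrightarrow> f x = f y"
  by (induction f rule: polyfun.induct) auto

lemma polyfun_mono: "f \<in> polyfun V \<Longrightarrow> V \<subseteq> W \<Longrightarrow> f \<in> polyfun W"
  by (induction f rule: polyfun.induct) (auto intro: polyfun.intros)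

lemma polyfun_subst: "f \<in> polyfun V \<Longrightarrow> (\<And>v. v \<in> V \<Longrightarrow> (\<lambda>x. s v x) \<in> polyfun W)
   \<Longrightarrow> (\<lambda>x. f (\<lambda>v. s v x)) \<in> polyfun W"
  by (induction f rule: polyfun.induct) (auto intro: polyfun.intros)

lemma polyfun_sum: "finite S \<Longrightarrow> (\<And>i. i \<in> S \<Longrightarrow> f i \<in> polyfun V) \<Longrightarrow> (\<lambda>x. \<Sum>i\<in>S. f i x) \<in> polyfun V"
proof (induction S rule: finite_induct)
  case empty then show ?case using polyfun.pf_const[of 0] by simp
next
  case (insert a S) then show ?case by (auto intro!: polyfun.pf_add)
qed

lemma polyfun_prod: "finite S \<Longrightarrow> (\<And>i. i \<in> S \<Longrightarrow> f i \<in> polyfun V) \<Longrightarrow> (\<lambda>x. \<Prod>i\<in>S. f i x) \<in> polyfun V"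
proof (induction S rule: finite_induct)
  case empty then show ?case using polyfun.pf_const[of 1] by simp
next
  case (insert a S) then show ?case by (auto intro!: polyfun.pf_mult)
qed

lemma polyfun_minus: "f \<in> polyfun V \<Longrightarrow> g \<in> polyfun V \<Longrightarrow> (\<lambda>x. f x - g x) \<in> polyfun V"
proof -
  assume "f \<in> polyfun V" "g \<in> polyfun V"
  then have "(\<lambda>x. f x + (\<lambda>x. -1) x * g x) \<in> polyfun V" by (intro polyfun.intros)
  then show ?thesis by simp
qed

lemma polyfun_cmult: assumes "f \<in> polyfun V" shows "(\<lambda>x. c * f x) \<in> polyfun V"
  using polyfun.pf_mult[OF polyfun.pf_const assms] by simp

lemma polyfun_sq: "f \<in> polyfun V \<Longrightarrow> (\<lambda>x. (f x)^2) \<in> polyfun V"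
  using polyfun.pf_mult[of f V f] by (simp add: power2_eq_square)

lemma polyfun_det:
  assumes "\<And>x. M x \<in> carrier_mat n n"
    and "\<And>i j. i < n \<Longrightarrow> j < n \<Longrightarrow> (\<lambda>x. M x $$ (i,j)) \<in> polyfun V"
  shows "(\<lambda>x. det (M x)) \<in> polyfun V"
proof -
  have "(\<lambda>x. det (M x)) = (\<lambda>x. \<Sum>p\<in>{p. p permutes {0..<n}}. signof p * (\<Prod>i = 0..<n. M x $$ (i, p i)))"
    using det_def'[OF assms(1)] by auto
  also have "\<dots> \<in> polyfun V"
    apply (rule polyfun_sum)
     apply (simp add: finite_permutations)
    apply (rule polyfun_cmult)
    apply (rule polyfun_prod)
     apply simp
    using assms(2) permutes_in_image by fastforce
  finally show ?thesis .
qed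

lemma polyfun_coeffs:
  assumes "f \<in> polyfun (insert v U)"
  shows "\<exists>P d. (\<forall>x. degree (P x) \<le> d) \<and> (\<forall>k. (\<lambda>x. coeff (P x) k) \<in> polyfun U)
     \<and> (\<forall>x. f x = poly (P x) (x v))"
  using assms
proof (induction f rule: polyfun.induct)
  case (pf_const c)
  have "(\<lambda>x. coeff [:c:] k) \<in> polyfun U" for k
    using polyfun.pf_const[of "coeff [:c:] k" U] by simp
  then show ?case by (intro exI[of _ "\<lambda>x. [:c:]"] exI[of _ 0]) auto
next
  case (pf_var w)
  show ?case
  proof (cases "w = v")
    case True
    have "(\<lambda>x. coeff [:0,1:] k) \<in> polyfun U" for k :: nat
      using polyfun.pf_const[of "coeff [:0,1:] k" U] by simp
    then show ?thesis using True by (intro exI[of _ "\<lambda>x. [:0,1:]"] exI[of _ 1]) auto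
  next
    case False
    with pf_var have wU: "w \<in> U" by auto
    have "(\<lambda>x. coeff [:x w:] k) \<in> polyfun U" for k
    proof (cases k)
      case 0 then show ?thesis using polyfun.pf_var[OF wU] by simp
    next
      case (Suc m) then show ?thesis using polyfun.pf_const[of 0 U] by simp
    qed
    then show ?thesis by (intro exI[of _ "\<lambda>x. [:x w:]"] exI[of _ 0]) auto
  qed
next
  case (pf_add p q)
  from pf_add.IH obtain P1 d1 P2 d2 where
    1: "\<forall>x. degree (P1 x) \<le> d1" "\<forall>k. (\<lambda>x. coeff (P1 x) k) \<in> polyfun U" "\<forall>x. p x = poly (P1 x) (x v)" and
    2: "\<forall>x. degree (P2 x) \<le> d2" "\<forall>k. (\<lambda>x. coeff (P2 x) k) \<in> polyfun U" "\<forall>x. q x = poly (P2 x) (x v)"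
    by blast
  show ?case
  proof (intro exI[of _ "\<lambda>x. P1 x + P2 x"] exI[of _ "max d1 d2"] conjI allI)
    fix x show "degree (P1 x + P2 x) \<le> max d1 d2"
      using 1(1) 2(1) by (meson degree_add_le max.cobounded1 max.cobounded2 order_trans)
  next
    fix k show "(\<lambda>x. coeff (P1 x + P2 x) k) \<in> polyfun U"
      using polyfun.pf_add[OF 1(2)[rule_format, of k] 2(2)[rule_format, of k]] by simp
  next
    fix x show "p x + q x = poly (P1 x + P2 x) (x v)" using 1 2 by simp
  qed
next
  case (pf_mult p q)
  from pf_mult.IH obtain P1 d1 P2 d2 where
    1: "\<forall>x. degree (P1 x) \<le> d1" "\<forall>k. (\<lambda>x. coeff (P1 x) k) \<in> polyfun U" "\<forall>x. p x = poly (P1 x) (x v)" and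
    2: "\<forall>x. degree (P2 x) \<le> d2" "\<forall>k. (\<lambda>x. coeff (P2 x) k) \<in> polyfun U" "\<forall>x. q x = poly (P2 x) (x v)"
    by blast
  show ?case
  proof (intro exI[of _ "\<lambda>x. P1 x * P2 x"] exI[of _ "d1 + d2"] conjI allI)
    fix x show "degree (P1 x * P2 x) \<le> d1 + d2"
      using 1(1) 2(1) by (meson add_mono degree_mult_le order_trans)
  next
    fix k show "(\<lambda>x. coeff (P1 x * P2 x) k) \<in> polyfun U"
      unfolding coeff_mult
      by (rule polyfun_sum, simp, rule polyfun.pf_mult, insert 1(2) 2(2), auto)
  next
    fix x show "p x * q x = poly (P1 x * P2 x) (x v)" using 1 2 by simp
  qed
qed



fun mh :: "nat \<Rightarrow> (nat \<Rightarrow> real) \<Rightarrow> nat \<Rightarrow> real mat \<Rightarrow> real mat" where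
  "mh n c 0 A = c 0 \<cdot>\<^sub>m 1\<^sub>m n"
| "mh n c (Suc d) A = c 0 \<cdot>\<^sub>m 1\<^sub>m n + A * mh n (\<lambda>k. c (Suc k)) d A"

fun sh :: "(nat \<Rightarrow> real) \<Rightarrow> nat \<Rightarrow> real \<Rightarrow> real" where
  "sh c 0 s = c 0"
| "sh c (Suc d) s = c 0 + s * sh (\<lambda>k. c (Suc k)) d s"

lemma sh_sum: "sh c d s = (\<Sum>k\<le>d. c k * s^k)"
proof (induction d arbitrary: c)
  case 0 then show ?case by simp
next
  case (Suc d)
  show ?case by (simp add: Suc sum.atMost_Suc_shift sum_distrib_left mult.assoc mult.left_commute
      del: sum.atMost_Suc)
qed

lemma mh_carrier: "A \<in> carrier_mat n n \<Longrightarrow> mh n c d A \<in> carrier_mat n n"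
  by (induction d arbitrary: c) auto

lemma scal_sim: fixes P Q :: "real mat" assumes P: "P \<in> carrier_mat n n" and Q: "Q \<in> carrier_mat n n" and PQ: "P * Q = 1\<^sub>m n"
  shows "P * (c \<cdot>\<^sub>m 1\<^sub>m n) * Q = c \<cdot>\<^sub>m 1\<^sub>m n"
proof -
  have "P * (c \<cdot>\<^sub>m 1\<^sub>m n) = c \<cdot>\<^sub>m (P * 1\<^sub>m n)" using mult_smult_distrib[OF P one_carrier_mat] by simp
  also have "P * 1\<^sub>m n = P" using P by (rule right_mult_one_mat)
  finally have "P * (c \<cdot>\<^sub>m 1\<^sub>m n) * Q = c \<cdot>\<^sub>m (P * Q)"
    using mult_smult_assoc_mat[OF P Q] by simp
  then show ?thesis using PQ by simp
qed

lemma mh_similar: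
  assumes A: "A \<in> carrier_mat n n" and B: "B \<in> carrier_mat n n" and P: "P \<in> carrier_mat n n"
    and Q: "Q \<in> carrier_mat n n" and QP: "Q * P = 1\<^sub>m n" and PQ: "P * Q = 1\<^sub>m n" and APBQ: "A = P * B * Q"
  shows "mh n c d A = P * mh n c d B * Q"
proof (induction d arbitrary: c)
  case 0
  show ?case using scal_sim[OF P Q PQ] by simp
next
  case (Suc d)
  let ?M = "mh n (\<lambda>k. c (Suc k)) d B"
  have M: "?M \<in> carrier_mat n n" using mh_carrier[OF B] .
  have "mh n c (Suc d) A = c 0 \<cdot>\<^sub>m 1\<^sub>m n + (P * B * Q) * (P * ?M * Q)"
    using Suc APBQ by simp
  also have "(P * B * Q) * (P * ?M * Q) = P * (B * ?M) * Q"
  proof -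
    have "(P * B * Q) * (P * ?M * Q) = P * B * (Q * P) * ?M * Q"
      using P B Q M by (simp add: assoc_mult_mat[of _ n n _ n _ n])
    also have "\<dots> = P * (B * ?M) * Q" using P B Q M QP by (simp add: assoc_mult_mat[of _ n n _ n _ n])
    finally show ?thesis .
  qed
  also have "c 0 \<cdot>\<^sub>m 1\<^sub>m n = P * (c 0 \<cdot>\<^sub>m 1\<^sub>m n) * Q"
    using scal_sim[OF P Q PQ] by simp
  also have "P * (c 0 \<cdot>\<^sub>m 1\<^sub>m n) * Q + P * (B * ?M) * Q = P * (c 0 \<cdot>\<^sub>m 1\<^sub>m n + B * ?M) * Q"
  proof -
    have c1: "c 0 \<cdot>\<^sub>m 1\<^sub>m n \<in> carrier_mat n n" by simp
    have BM: "B * ?M \<in> carrier_mat n n" using B M by simp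
    have "P * (c 0 \<cdot>\<^sub>m 1\<^sub>m n + B * ?M) = P * (c 0 \<cdot>\<^sub>m 1\<^sub>m n) + P * (B * ?M)"
      by (rule mult_add_distrib_mat[OF P c1 BM])
    moreover have "(P * (c 0 \<cdot>\<^sub>m 1\<^sub>m n) + P * (B * ?M)) * Q = P * (c 0 \<cdot>\<^sub>m 1\<^sub>m n) * Q + P * (B * ?M) * Q"
      by (rule add_mult_distrib_mat, insert P c1 BM Q, auto)
    ultimately show ?thesis by simp
  qed
  finally show ?case by simp
qed

lemma mh_index: assumes "A \<in> carrier_mat n n" "i < n" "j < n"
  shows "mh n c (Suc d) A $$ (i,j) = c 0 * (if i = j then 1 else 0) + (\<Sum>k\<in>{0..<n}. A $$ (i,k) * mh n (\<lambda>k. c (Suc k)) d A $$ (k,j))"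
proof -
  have M: "mh n (\<lambda>k. c (Suc k)) d A \<in> carrier_mat n n" using mh_carrier[OF assms(1)] .
  then show ?thesis using assms by (simp add: scalar_prod_def carrier_matD)
qed

lemma mh_ut: assumes B: "B \<in> carrier_mat n n" and ut: "upper_triangular B"
  shows "upper_triangular (mh n c d B) \<and> (\<forall>i<n. mh n c d B $$ (i,i) = sh c d (B $$ (i,i)))"
proof (induction d arbitrary: c)
  case 0 then show ?case by auto
next
  case (Suc d)
  let ?M = "mh n (\<lambda>k. c (Suc k)) d B"
  have M: "?M \<in> carrier_mat n n" using mh_carrier[OF B] .
  from Suc[of "\<lambda>k. c (Suc k)"] have utM: "upper_triangular ?M" and dM: "\<And>i. i < n \<Longrightarrow> ?M $$ (i,i) = sh (\<lambda>k. c (Suc k)) d (B $$ (i,i))" by auto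
  have "mh n c (Suc d) B $$ (i,j) = 0" if ji: "j < i" and i: "i < n" for i j
  proof -
    have "(\<Sum>k\<in>{0..<n}. B $$ (i,k) * ?M $$ (k,j)) = 0"
    proof (rule sum.neutral, intro ballI)
      fix k assume k: "k \<in> {0..<n}"
      show "B $$ (i,k) * ?M $$ (k,j) = 0"
      proof (cases "k < i")
        case True then have "B $$ (i,k) = 0" using ut B i by auto
        then show ?thesis by simp
      next
        case False then have "?M $$ (k,j) = 0" using utM M k ji by auto
        then show ?thesis by simp
      qed
    qed
    then show ?thesis using mh_index[OF B i, of j c d] ji i by simp
  qed
  then have ut': "upper_triangular (mh n c (Suc d) B)" using mh_carrier[OF B, of c "Suc d"]
    using B by (intro upper_triangularI) (simp add: carrier_matD)
  have "mh n c (Suc d) B $$ (i,i) = sh c (Suc d) (B $$ (i,i))" if i: "i < n" for i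
  proof -
    have "(\<Sum>k\<in>{0..<n}. B $$ (i,k) * ?M $$ (k,i)) = B $$ (i,i) * ?M $$ (i,i) + (\<Sum>k\<in>{0..<n} - {i}. B $$ (i,k) * ?M $$ (k,i))"
      using i by (subst sum.remove[of _ i]) auto
    also have "(\<Sum>k\<in>{0..<n} - {i}. B $$ (i,k) * ?M $$ (k,i)) = 0"
    proof (rule sum.neutral, intro ballI)
      fix k assume k: "k \<in> {0..<n} - {i}"
      show "B $$ (i,k) * ?M $$ (k,i) = 0"
      proof (cases "k < i")
        case True then have "B $$ (i,k) = 0" using ut B i by auto
        then show ?thesis by simp
      next
        case False then have "?M $$ (k,i) = 0" using utM M k by auto
        then show ?thesis by simp
      qed
    qed
    finally show ?thesis using mh_index[OF B i i, of c d] dM[OF i] by simp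
  qed
  with ut' show ?case by blast
qed

lemma det_mh: assumes A: "A \<in> carrier_mat n n" and cp: "char_poly A = (\<Prod>e\<leftarrow>es. [:- e, 1:])"
  shows "det (mh n c d A) = (\<Prod>e\<leftarrow>es. sh c d e)"
proof -
  obtain B P Q where sd: "schur_decomposition A es = (B,P,Q)" by (cases "schur_decomposition A es") auto
  from schur_decomposition[OF A cp sd] have wit: "similar_mat_wit A B P Q" and ut: "upper_triangular B"
    and dg: "diag_mat B = es" by auto
  from wit A have B: "B \<in> carrier_mat n n" and P: "P \<in> carrier_mat n n" and Q: "Q \<in> carrier_mat n n"
    and PQ: "P * Q = 1\<^sub>m n" and QP: "Q * P = 1\<^sub>m n" and APBQ: "A = P * B * Q"
    unfolding similar_mat_wit_def Let_def by auto
  have "mh n c d A = P * mh n c d B * Q" by (rule mh_similar[OF A B P Q QP PQ APBQ])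
  then have "det (mh n c d A) = det P * det (mh n c d B) * det Q"
    using P Q mh_carrier[OF B] by (simp add: det_mult[of _ n])
  also have "det P * det Q = 1" using PQ P Q det_mult[OF P Q] by simp
  then have "det P * det (mh n c d B) * det Q = det (mh n c d B)" by (simp add: algebra_simps)
  also have "det (mh n c d B) = prod_list (diag_mat (mh n c d B))"
    using det_upper_triangular[of "mh n c d B" n] mh_ut[OF B ut] mh_carrier[OF B] by auto
  also have "diag_mat (mh n c d B) = map (sh c d) (diag_mat B)"
    using mh_ut[OF B ut, of c d] mh_carrier[OF B, of c d] B unfolding diag_mat_def
    by (auto intro!: nth_equalityI)
  finally show ?thesis using dg by (simp add: comp_def)
qed



lemma mh_polyfun:
  assumes A: "\<And>x. A x \<in> carrier_mat n n"
    and Ae: "\<And>i j. i < n \<Longrightarrow> j < n \<Longrightarrow> (\<lambda>x. A x $$ (i,j)) \<in> polyfun V"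
    and c: "\<And>k. (\<lambda>x. c x k) \<in> polyfun V"
    and ij: "i < n" "j < n"
  shows "(\<lambda>x. mh n (c x) d (A x) $$ (i,j)) \<in> polyfun V"
  using c ij
proof (induction d arbitrary: c i j)
  case 0
  have "(\<lambda>x. c x 0 * (if i = j then 1 else 0)) \<in> polyfun V"
    using 0 by (intro polyfun.pf_mult polyfun.pf_const) auto
  then show ?case using 0 by simp
next
  case (Suc d)
  have "(\<lambda>x. c x 0 * (if i = j then 1 else 0) + (\<Sum>k\<in>{0..<n}. A x $$ (i,k) * mh n (\<lambda>k. c x (Suc k)) d (A x) $$ (k,j))) \<in> polyfun V"
    apply (intro polyfun.pf_add polyfun.pf_mult polyfun.pf_const polyfun_sum)
    using Suc by (auto intro!: Ae polyfun.pf_mult)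
  then show ?case using mh_index[OF A Suc.prems(2,3)] by simp
qed

lemma poly_le_sum: fixes p :: "real poly" assumes "degree p \<le> d" shows "poly p s = (\<Sum>i\<le>d. coeff p i * s^i)"
proof -
  have "poly p s = (\<Sum>i\<le>degree p. coeff p i * s^i)" by (rule poly_altdef)
  also have "\<dots> = (\<Sum>i\<le>d. coeff p i * s^i)"
    by (rule sum.mono_neutral_left) (use assms in \<open>auto simp: coeff_eq_0\<close>)
  finally show ?thesis .
qed

lemma elim:
  fixes v :: "nat \<times> nat"
  assumes f: "f \<in> polyfun (insert v U)" and vU: "v \<notin> U" and EU: "{..<n} \<times> {..<n} \<subseteq> U"
  shows "\<exists>g \<in> polyfun U. \<forall>x es. char_poly (mat n n x) = (\<Prod>e\<leftarrow>es. [:- e, 1:]) \<longrightarrow>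
            (g x = 0 \<longleftrightarrow> (\<exists>e\<in>set es. f (x(v := e)) = 0))"
proof -
  obtain P d where Pd: "\<forall>x. degree (P x) \<le> d" and Pc: "\<forall>k. (\<lambda>x. coeff (P x) k) \<in> polyfun U"
    and Pf: "\<forall>x. f x = poly (P x) (x v)"
    using polyfun_coeffs[OF f] by blast
  define g where "g x = det (mh n (\<lambda>k. coeff (P x) k) d (mat n n x))" for x
  have "g \<in> polyfun U"
    unfolding g_def
    apply (rule polyfun_det[of _ n])
     apply (rule mh_carrier, simp)
    apply (rule mh_polyfun[of _ n])
    using Pc EU by (auto intro: polyfun.pf_var)
  moreover have "g x = 0 \<longleftrightarrow> (\<exists>e\<in>set es. f (x(v := e)) = 0)"
    if cp: "char_poly (mat n n x) = (\<Prod>e\<leftarrow>es. [:- e, 1:])" for x es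
  proof -
    have "g x = (\<Prod>e\<leftarrow>es. sh (\<lambda>k. coeff (P x) k) d e)"
      unfolding g_def by (rule det_mh[OF _ cp]) simp
    also have "\<dots> = (\<Prod>e\<leftarrow>es. f (x(v := e)))"
    proof (rule arg_cong[where f = prod_list], rule map_cong[OF refl])
      fix e
      have "P (x(v := e)) = P x"
      proof (rule poly_eqI)
        fix k show "coeff (P (x(v := e))) k = coeff (P x) k"
          by (rule polyfun_dep[OF Pc[rule_format, of k]]) (use vU in auto)
      qed
      then show "sh (\<lambda>k. coeff (P x) k) d e = f (x(v := e))"
        using Pf poly_le_sum[OF Pd[rule_format, of x], of e] by (simp add: sh_sum)
    qed
    finally show ?thesis by (auto simp: prod_list_zero_iff image_iff)
  qed
  ultimately show ?thesis by blast
qed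



definition upd :: "nat \<Rightarrow> (nat \<times> nat \<Rightarrow> real) \<Rightarrow> nat \<Rightarrow> (nat \<Rightarrow> real) \<Rightarrow> (nat \<times> nat \<Rightarrow> real)" where
  "upd n x m y = (\<lambda>(a,b). if a = n \<and> b < m then y b else x (a,b))"

lemma mat_upd: "mat n n (upd n x m y) = (mat n n x :: real mat)"
  by (rule eq_matI) (auto simp: upd_def)

lemma upd_Suc: "(upd n x m y)((n,m) := e) = upd n x (Suc m) (y(m := e))"
  by (auto simp: upd_def fun_eq_iff)

lemma iter:
  fixes n :: nat
  assumes "f \<in> polyfun ({..<n} \<times> {..<n} \<union> {n} \<times> {..<m})"
  shows "\<exists>g\<in>polyfun ({..<n} \<times> {..<n}). \<forall>x es. char_poly (mat n n x) = (\<Prod>e\<leftarrow>es. [:- e, 1:]) \<longrightarrow>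
     (g x = 0 \<longleftrightarrow> (\<exists>y. (\<forall>k<m. y k \<in> set es) \<and> f (upd n x m y) = 0))"
  using assms
proof (induction m arbitrary: f)
  case 0
  have "upd n x 0 y = x" for x :: "nat \<times> nat \<Rightarrow> real" and y by (auto simp: upd_def)
  then show ?case using 0 by (intro bexI[of _ f]) auto
next
  case (Suc m)
  have eq: "{..<n} \<times> {..<n} \<union> {n} \<times> {..<Suc m} = insert (n,m) ({..<n} \<times> {..<n} \<union> {n} \<times> {..<m})"
    by auto
  have "\<exists>g \<in> polyfun ({..<n} \<times> {..<n} \<union> {n} \<times> {..<m}). \<forall>x es. char_poly (mat n n x) = (\<Prod>e\<leftarrow>es. [:- e, 1:]) \<longrightarrow>
            (g x = 0 \<longleftrightarrow> (\<exists>e\<in>set es. f (x((n,m) := e)) = 0))"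
    by (rule elim) (use Suc.prems eq in auto)
  then obtain g' where g': "g' \<in> polyfun ({..<n} \<times> {..<n} \<union> {n} \<times> {..<m})"
    and g'p: "\<And>x es. char_poly (mat n n x) = (\<Prod>e\<leftarrow>es. [:- e, 1:]) \<Longrightarrow>
            (g' x = 0 \<longleftrightarrow> (\<exists>e\<in>set es. f (x((n,m) := e)) = 0))" by blast
  from Suc.IH[OF g'] obtain g where g: "g \<in> polyfun ({..<n} \<times> {..<n})"
    and gp: "\<And>x es. char_poly (mat n n x) = (\<Prod>e\<leftarrow>es. [:- e, 1:]) \<Longrightarrow>
     (g x = 0 \<longleftrightarrow> (\<exists>y. (\<forall>k<m. y k \<in> set es) \<and> g' (upd n x m y) = 0))" by blast
  show ?case
  proof (intro bexI[OF _ g] allI impI)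
    fix x :: "nat \<times> nat \<Rightarrow> real" and es assume cp: "char_poly (mat n n x) = (\<Prod>e\<leftarrow>es. [:- e, 1:])"
    have cp': "char_poly (mat n n (upd n x m y)) = (\<Prod>e\<leftarrow>es. [:- e, 1:])" for y
      using cp by (simp add: mat_upd)
    show "g x = 0 \<longleftrightarrow> (\<exists>y. (\<forall>k<Suc m. y k \<in> set es) \<and> f (upd n x (Suc m) y) = 0)"
    proof
      assume "g x = 0"
      then obtain y where y: "\<forall>k<m. y k \<in> set es" and "g' (upd n x m y) = 0" using gp[OF cp] by blast
      then obtain e where e: "e \<in> set es" and "f ((upd n x m y)((n,m) := e)) = 0" using g'p[OF cp'] by blast
      then have "f (upd n x (Suc m) (y(m := e))) = 0" by (simp add: upd_Suc)
      moreover have "\<forall>k<Suc m. (y(m := e)) k \<in> set es" using y e by (auto simp: less_Suc_eq)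
      ultimately show "\<exists>y. (\<forall>k<Suc m. y k \<in> set es) \<and> f (upd n x (Suc m) y) = 0" by blast
    next
      assume "\<exists>y. (\<forall>k<Suc m. y k \<in> set es) \<and> f (upd n x (Suc m) y) = 0"
      then obtain y where y: "\<forall>k<Suc m. y k \<in> set es" and f0: "f (upd n x (Suc m) y) = 0" by blast
      have "y(m := y m) = y" by simp
      then have "f ((upd n x m y)((n,m) := y m)) = 0" using f0 by (metis upd_Suc)
      then have "g' (upd n x m y) = 0" using g'p[OF cp'] y by auto
      moreover have "\<forall>k<m. y k \<in> set es" using y by auto
      ultimately show "g x = 0" using gp[OF cp] by blast
    qed
  qed
qed



interpretation of_real_poly_hom: map_poly_inj_idom_hom "of_real :: real \<Rightarrow> complex" ..

lemma order_prod_lin: "Polynomial.order a (\<Prod>e\<leftarrow>es. [:- e, 1:]) = count (mset es) (a::real)"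
proof (induction es)
  case Nil then show ?case using order_root[of 1 a] by simp
next
  case (Cons e es)
  have nz: "(\<Prod>e\<leftarrow>es. [:- e, 1:]) \<noteq> (0::real poly)"
    by (auto simp: prod_list_zero_iff)
  have nz1: "[:- e, 1:] \<noteq> (0::real poly)" by simp
  have nz2: "[:- e, 1:] * (\<Prod>e\<leftarrow>es. [:- e, 1:]) \<noteq> (0::real poly)" using nz nz1 by (metis mult_eq_0_iff)
  have "Polynomial.order a [:- e, 1:] = (if a = e then 1 else 0)"
  proof (cases "a = e")
    case True then show ?thesis using order_linear[of a] by simp
  next
    case False then have "poly [:- e, 1:] a \<noteq> 0" by simp
    then show ?thesis using order_root[of "[:- e, 1:]" a] False by auto
  qed
  then show ?case using order_mult[OF nz2, of a] Cons by simp
qed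

lemma prod_lin_mset: "(\<Prod>e\<leftarrow>es. [:- e, 1:]) = (\<Prod>e\<leftarrow>es'. [:- e, 1:] :: real poly) \<Longrightarrow> mset es = mset es'"
  by (rule multiset_eqI) (metis order_prod_lin)

lemma prod_lin_perm: "mset es = mset es' \<Longrightarrow> (\<Prod>e\<leftarrow>es. [:- e, 1:]) = (\<Prod>e\<leftarrow>es'. [:- e, 1:] :: real poly)"
  by (metis mset_map prod_mset_prod_list)



lemma sym_real_eig:
  fixes X :: "real mat"
  assumes X: "X \<in> carrier_mat n n" and sym: "transpose_mat X = X"
    and ev: "eigenvalue (map_mat complex_of_real X) a"
  shows "Im a = 0"
proof -
  let ?Xc = "map_mat complex_of_real X"
  from ev obtain v where v: "v \<in> carrier_vec n" and vnz: "v \<noteq> 0\<^sub>v n" and Xv: "?Xc *\<^sub>v v = a \<cdot>\<^sub>v v"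
    unfolding eigenvalue_def eigenvector_def using X by auto
  have Xs: "X $$ (i,j) = X $$ (j,i)" if "i < n" "j < n" for i j
  proof -
    have "transpose_mat X $$ (i,j) = X $$ (j,i)" using X that by simp
    then show ?thesis using sym by simp
  qed
  have comp: "(\<Sum>j\<in>{0..<n}. complex_of_real (X $$ (i,j)) * v $ j) = a * v $ i" if i: "i < n" for i
  proof -
    have "(?Xc *\<^sub>v v) $ i = (\<Sum>j\<in>{0..<n}. complex_of_real (X $$ (i,j)) * v $ j)"
      using X v i by (simp add: scalar_prod_def)
    also have "(?Xc *\<^sub>v v) $ i = a * v $ i" using Xv v i by simp
    finally show ?thesis by simp
  qed
  define S where "S = (\<Sum>i\<in>{0..<n}. cnj (v $ i) * (\<Sum>j\<in>{0..<n}. complex_of_real (X $$ (i,j)) * v $ j))"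
  define N where "N = (\<Sum>i\<in>{0..<n}. cnj (v $ i) * v $ i)"
  have SN: "S = a * N" unfolding S_def N_def using comp
    by (simp add: sum_distrib_left mult.left_commute)
  have "cnj S = (\<Sum>i\<in>{0..<n}. v $ i * (\<Sum>j\<in>{0..<n}. complex_of_real (X $$ (i,j)) * cnj (v $ j)))"
    unfolding S_def by (simp add: cnj_sum)
  also have "\<dots> = (\<Sum>i\<in>{0..<n}. \<Sum>j\<in>{0..<n}. cnj (v $ j) * (complex_of_real (X $$ (j,i)) * v $ i))"
    by (rule sum.cong[OF refl], unfold sum_distrib_left, rule sum.cong[OF refl]) (simp add: Xs)
  also have "\<dots> = S" unfolding S_def sum_distrib_left by (rule sum.swap)
  finally have cS: "cnj S = S" .
  have cN: "cnj N = N" unfolding N_def by (simp add: cnj_sum mult.commute)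
  have "N \<noteq> 0"
  proof -
    from vnz v obtain i where i: "i < n" and vi: "v $ i \<noteq> 0" by (auto simp: vec_eq_iff)
    have "Re N = (\<Sum>i\<in>{0..<n}. (cmod (v $ i))^2)" unfolding N_def Re_sum
      by (intro sum.cong) (simp_all add: cmod_power2 flip: power2_eq_square)
    also have "\<dots> > 0"
      by (rule sum_pos2[of _ i]) (use i vi in auto)
    finally show ?thesis by auto
  qed
  from SN cS cN have "a * N = cnj a * N" by (metis complex_cnj_mult)
  with \<open>N \<noteq> 0\<close> have "a = cnj a" by simp
  then have "Im a = Im (cnj a)" by simp
  then show ?thesis by simp
qed

lemma real_split:
  fixes X :: "real mat"
  assumes X: "X \<in> carrier_mat n n" and sym: "transpose_mat X = X"
  shows "\<exists>es. length es = n \<and> char_poly X = (\<Prod>e\<leftarrow>es. [:- e, 1:])"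
proof -
  let ?Xc = "map_mat complex_of_real X"
  have Xc: "?Xc \<in> carrier_mat n n" using X by simp
  obtain as where as: "char_poly ?Xc = (\<Prod>a\<leftarrow>as. [:- a, 1:])" and las: "length as = n"
    using char_poly_factorized[OF Xc] by blast
  have re: "Im a = 0" if a: "a \<in> set as" for a
  proof -
    have "poly (char_poly ?Xc) a = 0" unfolding as by (rule linear_poly_root[OF a])
    then have "eigenvalue ?Xc a" using eigenvalue_root_char_poly[OF Xc] by simp
    then show ?thesis by (rule sym_real_eig[OF X sym])
  qed
  define es where "es = map Re as"
  have "map_poly complex_of_real (\<Prod>e\<leftarrow>es. [:- e, 1:]) = (\<Prod>e\<leftarrow>es. map_poly complex_of_real [:- e, 1:])"
    by (simp add: of_real_poly_hom.hom_prod_list comp_def)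
  also have "\<dots> = (\<Prod>a\<leftarrow>as. [:- a, 1:])"
    unfolding es_def map_map
    by (rule arg_cong[where f = prod_list], rule map_cong[OF refl]) (use re in \<open>auto simp: complex_eq_iff\<close>)
  also have "\<dots> = map_poly complex_of_real (char_poly X)"
    using as of_real_hom.char_poly_hom[OF X] by metis
  finally have "char_poly X = (\<Prod>e\<leftarrow>es. [:- e, 1:])" using of_real_poly_hom.eq_iff by metis
  moreover have "length es = n" using las es_def by simp
  ultimately show ?thesis by blast
qed



definition Lv :: "nat \<Rightarrow> real vec \<Rightarrow> real list" where "Lv n l = map (\<lambda>i. l $ i) [0..<n]"

lemma prod_lin_vec: "(\<Prod>i<n. [:- (l $ i), 1:]) = (\<Prod>e\<leftarrow>Lv n l. [:- e, 1:])"
  by (simp add: Lv_def prod.list_conv_set_nth atLeast0LessThan)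

lemma sorted_Lv: "(\<forall>i j. i \<le> j \<and> j < n \<longrightarrow> l $ j \<le> l $ i) \<longleftrightarrow> sorted (rev (Lv n l))"
  unfolding sorted_rev_iff_nth_mono Lv_def by auto

lemma eigvals_props:
  fixes X :: "real mat"
  assumes X: "X \<in> carrier_mat n n" and sym: "transpose_mat X = X"
  shows "eigvals X \<in> carrier_vec n \<and> char_poly X = (\<Prod>e\<leftarrow>Lv n (eigvals X). [:- e, 1:])"
proof -
  define P where "P l \<longleftrightarrow> l \<in> carrier_vec (dim_row X)
      \<and> (\<forall>i j. i \<le> j \<and> j < dim_row X \<longrightarrow> l $ j \<le> l $ i)
      \<and> char_poly X = (\<Prod>i<dim_row X. [:- (l $ i), 1:])" for l
  have dr: "dim_row X = n" using X by simp
  obtain es where les: "length es = n" and cp: "char_poly X = (\<Prod>e\<leftarrow>es. [:- e, 1:])"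
    using real_split[OF X sym] by blast
  define ls where "ls = rev (sort es)"
  define l where "l = vec n (\<lambda>i. ls ! i)"
  have lls: "Lv n l = ls" unfolding Lv_def l_def ls_def using les
    by (intro nth_equalityI) auto
  have "P l" unfolding P_def dr prod_lin_vec sorted_Lv lls
  proof (intro conjI)
    show "l \<in> carrier_vec n" unfolding l_def by simp
    show "sorted (rev ls)" unfolding ls_def by simp
    show "char_poly X = (\<Prod>e\<leftarrow>ls. [:- e, 1:])" unfolding cp
      by (rule prod_lin_perm) (simp add: ls_def)
  qed
  moreover have "l' = l" if "P l'" for l'
  proof -
    from that have l': "l' \<in> carrier_vec n" "sorted (rev (Lv n l'))" "char_poly X = (\<Prod>e\<leftarrow>Lv n l'. [:- e, 1:])"
      unfolding P_def dr prod_lin_vec sorted_Lv by auto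
    from \<open>P l\<close> have l: "l \<in> carrier_vec n" "sorted (rev (Lv n l))" "char_poly X = (\<Prod>e\<leftarrow>Lv n l. [:- e, 1:])"
      unfolding P_def dr prod_lin_vec sorted_Lv by auto
    have "mset (Lv n l') = mset (Lv n l)" using prod_lin_mset l'(3) l(3) by metis
    then have "mset (rev (Lv n l')) = mset (rev (Lv n l))" by simp
    then have "rev (Lv n l') = rev (Lv n l)"
      using properties_for_sort[OF _ l'(2)] properties_for_sort[OF _ l(2)] by metis
    then have "Lv n l' = Lv n l" by simp
    then show ?thesis using l l' unfolding Lv_def
      by (intro eq_vecI) (auto simp: list_eq_iff_nth_eq)
  qed
  ultimately have "eigvals X = l" unfolding eigvals_def P_def[symmetric] by (rule the_equality)
  with \<open>P l\<close> show ?thesis unfolding P_def dr prod_lin_vec by simp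
qed



lemma poly_prod_lin_upt: "poly (\<Prod>e\<leftarrow>map y [0..<n]. [:- e, 1:]) t = (\<Prod>j\<in>{0..<n}. t - y j :: real)"
  by (simp add: prod.list_conv_set_nth poly_prod)

lemma coeff_prod_lin: "coeff (\<Prod>e\<leftarrow>es. [:- e, 1:]) (length es) = (1::real)"
  by (induction es) (auto simp: coeff_eq_0 degree_linear_factors)

lemma degree_prod_lin: "degree (\<Prod>e\<leftarrow>es. [:- e, 1:] :: real poly) = length es"
  using degree_linear_factors[of uminus es] by simp

lemma char_poly_eval:
  fixes X :: "real mat"
  assumes X: "X \<in> carrier_mat n n"
  shows "poly (char_poly X) t = det (mat n n (\<lambda>(i,j). (if i = j then t else 0) - X $$ (i,j)))"
  unfolding char_poly_def
  by (rule poly_det_cong[of _ n]) (use X in \<open>auto simp: char_poly_matrix_def\<close>)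



lemma polyfun_uminus: "f \<in> polyfun V \<Longrightarrow> (\<lambda>x. - f x) \<in> polyfun V"
  using polyfun_cmult[of f V "-1"] by simp

theorem proposition1p1:
  fixes n :: nat and p :: "(nat \<Rightarrow> real) \<Rightarrow> real" and M :: "real vec set"
  assumes "p \<in> polyfun {..<n}"
    and "M = {x \<in> carrier_vec n. p (\<lambda>i. x $ i) = 0}"
    and "\<And>\<sigma>. \<sigma> permutes {..<n} \<Longrightarrow> perm_vec \<sigma> ` M = M"
  shows "\<exists>q \<in> polyfun ({..<n} \<times> {..<n}).
           {X \<in> carrier_mat n n. transpose_mat X = X \<and> eigvals X \<in> M}
         = {X \<in> carrier_mat n n. transpose_mat X = X \<and> q (\<lambda>(i, j). X $$ (i, j)) = 0}"
proof -
  note pP = assms(1) and Mdef = assms(2) and Msym = assms(3)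
  define F where "F x = (p (\<lambda>i. x (n,i)))^2 + (\<Sum>t\<in>{0..n}. ((\<Prod>j\<in>{0..<n}. real t - x (n,j))
      - det (mat n n (\<lambda>(i,j). (if i = j then real t else 0) - x (i,j))))^2)" for x :: "nat \<times> nat \<Rightarrow> real"
  let ?V = "{..<n} \<times> {..<n} \<union> {n} \<times> {..<n}"
  have F: "F \<in> polyfun ?V"
  proof -
    have p1: "(\<lambda>x. p (\<lambda>i. x (n,i))) \<in> polyfun ?V"
      by (rule polyfun_subst[OF pP]) (auto intro: polyfun.pf_var)
    have dt: "(\<lambda>x. det (mat n n (\<lambda>(i,j). (if i = j then real t else 0) - x (i,j)))) \<in> polyfun ?V" for t
      by (rule polyfun_det[of _ n]) (auto intro!: polyfun_minus polyfun_uminus polyfun.pf_var polyfun.pf_const)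
    have pr: "(\<lambda>x. \<Prod>j\<in>{0..<n}. real t - x (n,j)) \<in> polyfun ?V" for t
      by (rule polyfun_prod) (auto intro!: polyfun_minus polyfun.pf_var polyfun.pf_const)
    show ?thesis unfolding F_def[abs_def]
      by (intro polyfun.pf_add polyfun_sq p1 polyfun_sum polyfun_minus pr dt) simp
  qed
  from iter[OF F] obtain q where q: "q \<in> polyfun ({..<n} \<times> {..<n})"
    and qp: "\<And>x es. char_poly (mat n n x) = (\<Prod>e\<leftarrow>es. [:- e, 1:]) \<Longrightarrow>
     (q x = 0 \<longleftrightarrow> (\<exists>y. (\<forall>k<n. y k \<in> set es) \<and> F (upd n x n y) = 0))" by blast
  have key: "eigvals X \<in> M \<longleftrightarrow> q (\<lambda>(i, j). X $$ (i, j)) = 0"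
    if X: "X \<in> carrier_mat n n" and sym: "transpose_mat X = X" for X
  proof -
    define x where "x = (\<lambda>(i, j). X $$ (i, j))"
    have mx: "mat n n x = X" unfolding x_def using X by (intro eq_matI) auto
    define l where "l = eigvals X"
    define es where "es = Lv n l"
    from eigvals_props[OF X sym] have lc: "l \<in> carrier_vec n" and cp: "char_poly X = (\<Prod>e\<leftarrow>es. [:- e, 1:])"
      unfolding l_def es_def by auto
    have les: "length es = n" unfolding es_def Lv_def by simp
    have qx: "q x = 0 \<longleftrightarrow> (\<exists>y. (\<forall>k<n. y k \<in> set es) \<and> F (upd n x n y) = 0)"
      by (rule qp) (simp add: mx cp)
    have Fupd: "F (upd n x n y) = (p y)^2 + (\<Sum>t\<in>{0..n}. ((\<Prod>j\<in>{0..<n}. real t - y j) - poly (char_poly X) (real t))^2)" for y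
    proof -
      have "p (\<lambda>i. upd n x n y (n,i)) = p y"
        by (rule polyfun_dep[OF pP]) (auto simp: upd_def)
      moreover have "(\<Prod>j\<in>{0..<n}. real t - upd n x n y (n,j)) = (\<Prod>j\<in>{0..<n}. real t - y j)" for t
        by (rule prod.cong) (auto simp: upd_def)
      moreover have "det (mat n n (\<lambda>(i,j). (if i = j then real t else 0) - upd n x n y (i,j)))
          = poly (char_poly X) (real t)" for t
      proof -
        have "mat n n (\<lambda>(i,j). (if i = j then real t else 0) - upd n x n y (i,j))
           = mat n n (\<lambda>(i,j). (if i = j then real t else 0) - X $$ (i,j))"
          by (intro eq_matI) (auto simp: upd_def x_def)
        then show ?thesis using char_poly_eval[OF X] by simp
      qed
      ultimately show ?thesis unfolding F_def by simp
    qed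
    show ?thesis
    proof
      assume lM: "eigvals X \<in> M"
      define y where "y = (\<lambda>i. l $ i)"
      have "p y = 0" using lM unfolding Mdef y_def l_def by auto
      moreover have "(\<Prod>j\<in>{0..<n}. real t - y j) = poly (char_poly X) (real t)" for t
        unfolding cp es_def Lv_def y_def by (rule poly_prod_lin_upt[symmetric])
      ultimately have "F (upd n x n y) = 0" unfolding Fupd by simp
      moreover have "\<forall>k<n. y k \<in> set es" unfolding y_def es_def Lv_def by auto
      ultimately show "q (\<lambda>(i, j). X $$ (i, j)) = 0" using qx unfolding x_def by blast
    next
      assume "q (\<lambda>(i, j). X $$ (i, j)) = 0"
      then obtain y where "F (upd n x n y) = 0" using qx unfolding x_def by blast
      then have F0: "(p y)^2 + (\<Sum>t\<in>{0..n}. ((\<Prod>j\<in>{0..<n}. real t - y j) - poly (char_poly X) (real t))^2) = 0"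
        unfolding Fupd .
      have sn: "(\<Sum>t\<in>{0..n}. ((\<Prod>j\<in>{0..<n}. real t - y j) - poly (char_poly X) (real t))^2) \<ge> 0"
        by (intro sum_nonneg) simp
      have py: "p y = 0" using F0 sn by (smt (verit) zero_le_power2 power_zero_numeral zero_eq_power2)
      have "(\<Sum>t\<in>{0..n}. ((\<Prod>j\<in>{0..<n}. real t - y j) - poly (char_poly X) (real t))^2) = 0"
        using F0 py by simp
      then have tt: "\<forall>t\<in>{0..n}. ((\<Prod>j\<in>{0..<n}. real t - y j) - poly (char_poly X) (real t))^2 = 0"
        by (subst (asm) sum_nonneg_eq_0_iff) auto
      define ys where "ys = map y [0..<n]"
      let ?Q = "(\<Prod>e\<leftarrow>ys. [:- e, 1:]) :: real poly"
      have roots: "poly (?Q - char_poly X) (real t) = 0" if "t \<le> n" for t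
      proof -
        have "poly ?Q (real t) = (\<Prod>j\<in>{0..<n}. real t - y j)" unfolding ys_def by (rule poly_prod_lin_upt)
        then show ?thesis using tt that by simp
      qed
      have QX: "?Q = char_poly X"
      proof (rule ccontr)
        assume ne: "?Q \<noteq> char_poly X"
        let ?D = "?Q - char_poly X"
        have Dnz: "?D \<noteq> 0" using ne by simp
        have dQ: "degree ?Q = n" using degree_prod_lin[of ys] unfolding ys_def by simp
        have dX: "degree (char_poly X) = n" using degree_prod_lin[of es] les cp by simp
        have cQ: "coeff ?Q n = 1" using coeff_prod_lin[of ys] unfolding ys_def by simp
        have cX: "coeff (char_poly X) n = 1" using coeff_prod_lin[of es] les cp by simp
        have dD: "degree ?D \<le> n" using degree_diff_le[of ?Q n "char_poly X"] dQ dX by simp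
        have "coeff ?D n = 0" using cQ cX by simp
        then have "degree ?D \<noteq> n" using Dnz by (metis leading_coeff_0_iff)
        with dD have dlt: "degree ?D < n" by simp
        have sub: "real ` {0..n} \<subseteq> {t. poly ?D t = 0}" using roots by auto
        have "card (real ` {0..n}) \<le> card {t. poly ?D t = 0}"
          by (rule card_mono[OF poly_roots_finite[OF Dnz] sub])
        moreover have "card (real ` {0..n}) = Suc n" by (subst card_image) (auto simp: inj_on_def)
        moreover have "card {t. poly ?D t = 0} \<le> degree ?D" by (rule card_poly_roots_bound[OF Dnz])
        ultimately show False using dlt by simp
      qed
      then have "mset ys = mset es" using cp prod_lin_mset by metis
      then obtain \<sigma> where \<sigma>: "\<sigma> permutes {..<length ys}" and pl: "permute_list \<sigma> ys = es"
        by (metis mset_eq_permutation)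
      have lys: "length ys = n" unfolding ys_def by simp
      have sn: "\<sigma> i < n" if "i < n" for i using permutes_in_image[OF \<sigma>] that lys by auto
      have li: "l $ i = y (\<sigma> i)" if i: "i < n" for i
      proof -
        have "l $ i = es ! i" unfolding es_def Lv_def using i by simp
        also have "\<dots> = ys ! (\<sigma> i)" using i lys unfolding pl[symmetric] permute_list_def by simp
        also have "\<dots> = y (\<sigma> i)" unfolding ys_def using sn[OF i] by simp
        finally show ?thesis .
      qed
      define w where "w = vec n y"
      have wM: "w \<in> M" unfolding Mdef w_def
      proof (intro CollectI conjI)
        show "vec n y \<in> carrier_vec n" by simp
        have "p (\<lambda>i. vec n y $ i) = p y" by (rule polyfun_dep[OF pP]) auto
        then show "p (\<lambda>i. vec n y $ i) = 0" using py by simp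
      qed
      have \<sigma>n: "\<sigma> permutes {..<n}" using \<sigma> lys by simp
      have iinv: "Hilbert_Choice.inv (Hilbert_Choice.inv \<sigma>) = \<sigma>"
        using permutes_bij[OF \<sigma>n] by (simp add: inv_inv_eq)
      have "perm_vec (Hilbert_Choice.inv \<sigma>) w = l"
        unfolding perm_vec_def iinv w_def using lc li sn by (intro eq_vecI) auto
      then have "l \<in> perm_vec (Hilbert_Choice.inv \<sigma>) ` M" using wM by blast
      then show "eigvals X \<in> M" using Msym[OF permutes_inv[OF \<sigma>n]] unfolding l_def by simp
    qed
  qed
  show ?thesis
    by (intro bexI[OF _ q]) (auto simp: key)
qed

end
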